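(* Let $C_1,C_2$ be Archimedean $d$-copulas with strict generators $\phi_1,\phi_2$, respectively. If the function $f=\phi_1\circ\phi_2^{-1}:[0,\infty)\to[0,\infty)$ is subadditive near $\infty$, then $C_1\le_{loc}C_2$.
   Context: A generator is a continuous, strictly decreasing function $\phi:[0,1]\to[0,\infty]$ with $\phi(1)=0$; it is strict if $\lim_{s\searrow0}\phi(s)=\infty$, in which case $\phi$ is a bijection $(0,1]\to[0,\infty)$ with inverse $\phi^{-1}$. A $d$-copula $C$ is Archimedean with strict generator $\phi$ if $C(\boldsymbol u)=\phi^{-1}(\sum_{k=1}^d\phi(u_k))$ (with $C(\boldsymbol u)=0$ if some $u_k=0$). A function $f:[0,\infty)\to[0,\infty)$ is subadditive near $\infty$ if there is $M\ge0$ with $f(x+y)\le f(x)+f(y)$ for all $x,y\in[M,\infty)$. $C_1\le_{loc}C_2$ means there is $\varepsilon>0$ with $C_1(\boldsymbol u)\le C_2(\boldsymbol u)$ for all $\boldsymbol u\in B_\varepsilon(\boldsymbol 0)\cap[0,1]^d$ (Euclidean ball). *)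

theory Defs
  imports "HOL-Analysis.Analysis"
begin

text \<open>Strict generator, represented by its restriction to (0,1]: continuous, strictly
decreasing, phi 1 = 0, and phi s tends to infinity as s tends to 0 from the right
(so phi 0 = infinity in the extended sense). The value at 0 is irrelevant.\<close>
definition strict_generator :: "(real \<Rightarrow> real) \<Rightarrow> bool" where
  "strict_generator \<phi> \<longleftrightarrow>
     continuous_on {0<..1} \<phi> \<and>
     (\<forall>x y. 0 < x \<and> x < y \<and> y \<le> 1 \<longrightarrow> \<phi> y < \<phi> x) \<and>
     \<phi> 1 = 0 \<and>
     filterlim \<phi> at_top (at_right 0)"

definition gen_inv :: "(real \<Rightarrow> real) \<Rightarrow> real \<Rightarrow> real" where
  "gen_inv \<phi> = the_inv_into {0<..1} \<phi>"

definition archimedean :: "(real \<Rightarrow> real) \<Rightarrow> real ^ 'd \<Rightarrow> real" where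
  "archimedean \<phi> u =
     (if \<exists>k. u $ k = 0 then 0 else gen_inv \<phi> (\<Sum>k\<in>UNIV. \<phi> (u $ k)))"

definition unit_cube :: "(real ^ 'd) set" where
  "unit_cube = {u. \<forall>i. 0 \<le> u $ i \<and> u $ i \<le> 1}"

text \<open>d-copula: grounded, uniform margins, d-increasing (nonnegative C-volume of boxes).\<close>
definition is_copula :: "(real ^ 'd \<Rightarrow> real) \<Rightarrow> bool" where
  "is_copula C \<longleftrightarrow>
     (\<forall>u\<in>unit_cube. (\<exists>i. u $ i = 0) \<longrightarrow> C u = 0) \<and>
     (\<forall>u\<in>unit_cube. \<forall>i. (\<forall>j. j \<noteq> i \<longrightarrow> u $ j = 1) \<longrightarrow> C u = u $ i) \<and>
     (\<forall>a\<in>unit_cube. \<forall>b\<in>unit_cube. (\<forall>i. a $ i \<le> b $ i) \<longrightarrow>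
        0 \<le> (\<Sum>S\<in>Pow UNIV. (-1) ^ card S * C (\<chi> i. if i \<in> S then a $ i else b $ i)))"

definition subadditive_near_infinity :: "(real \<Rightarrow> real) \<Rightarrow> bool" where
  "subadditive_near_infinity f \<longleftrightarrow>
     (\<exists>M\<ge>0. \<forall>x y. M \<le> x \<and> M \<le> y \<longrightarrow> f (x + y) \<le> f x + f y)"

definition loc_le :: "(real ^ 'd \<Rightarrow> real) \<Rightarrow> (real ^ 'd \<Rightarrow> real) \<Rightarrow> bool" where
  "loc_le C1 C2 \<longleftrightarrow>
     (\<exists>\<epsilon>>0. \<forall>u\<in>ball 0 \<epsilon> \<inter> unit_cube. C1 u \<le> C2 u)"

end

theory Submission
  imports Defs
begin

lemma sg_inj: "strict_generator \<phi> \<Longrightarrow> inj_on \<phi> {0<..1}"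
  unfolding strict_generator_def inj_on_def
  by (metis greaterThanAtMost_iff linorder_neq_iff order_less_irrefl)

lemma sg_mono: "strict_generator \<phi> \<Longrightarrow> 0 < x \<Longrightarrow> x < y \<Longrightarrow> y \<le> 1 \<Longrightarrow> \<phi> y < \<phi> x"
  unfolding strict_generator_def by blast

lemma sg_nonneg: "strict_generator \<phi> \<Longrightarrow> 0 < x \<Longrightarrow> x \<le> 1 \<Longrightarrow> 0 \<le> \<phi> x"
  using sg_mono[of \<phi> x 1] unfolding strict_generator_def
  by (cases "x = 1") auto

lemma sg_surj:
  assumes g: "strict_generator \<phi>" and y: "0 \<le> y"
  shows "\<exists>s\<in>{0<..1}. \<phi> s = y"
proof -
  have "filterlim \<phi> at_top (at_right 0)" using g unfolding strict_generator_def by blast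
  then have "eventually (\<lambda>x. y + 1 \<le> \<phi> x) (at_right (0::real))"
    unfolding filterlim_at_top by blast
  then obtain b where b: "b > 0" "\<And>x. x > 0 \<Longrightarrow> x < b \<Longrightarrow> y + 1 \<le> \<phi> x"
    unfolding eventually_at_right_field by blast
  define s0 where "s0 = min (b/2) (1/2)"
  have s0: "0 < s0" "s0 < b" "s0 \<le> 1" using b unfolding s0_def by auto
  have c: "continuous_on {s0..1} \<phi>"
    using g s0 unfolding strict_generator_def
    by (meson continuous_on_subset atLeastAtMost_iff greaterThanAtMost_iff order_less_le_trans subsetI)
  have "\<phi> 1 \<le> y" using g y unfolding strict_generator_def by simp
  moreover have "y \<le> \<phi> s0" using b(2)[OF s0(1) s0(2)] by simp
  ultimately obtain x where "s0 \<le> x" "x \<le> 1" "\<phi> x = y"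
    using IVT2'[OF _ _ s0(3) c] by blast
  then show ?thesis using s0 by auto
qed

lemma gi_props:
  assumes g: "strict_generator \<phi>" and y: "0 \<le> y"
  shows "gen_inv \<phi> y \<in> {0<..1}" "\<phi> (gen_inv \<phi> y) = y"
proof -
  have "y \<in> \<phi> ` {0<..1}" using sg_surj[OF g y] by force
  then show "gen_inv \<phi> y \<in> {0<..1}"
    unfolding gen_inv_def using sg_inj[OF g] by (metis the_inv_into_into order_refl)
  show "\<phi> (gen_inv \<phi> y) = y"
    unfolding gen_inv_def using sg_inj[OF g] \<open>y \<in> _\<close> by (metis f_the_inv_into_f)
qed

lemma gi_left: "strict_generator \<phi> \<Longrightarrow> x \<in> {0<..1} \<Longrightarrow> gen_inv \<phi> (\<phi> x) = x"
  unfolding gen_inv_def using sg_inj the_inv_into_f_f by metis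

lemma subadd_sum:
  fixes x :: "'a \<Rightarrow> real" and g :: "real \<Rightarrow> real"
  assumes M: "M \<ge> 0" and sa: "\<And>a b. M \<le> a \<Longrightarrow> M \<le> b \<Longrightarrow> g (a + b) \<le> g a + g b"
  shows "finite A \<Longrightarrow> A \<noteq> {} \<Longrightarrow> (\<forall>i\<in>A. M \<le> x i) \<Longrightarrow> g (\<Sum>i\<in>A. x i) \<le> (\<Sum>i\<in>A. g (x i))"
proof (induction A rule: finite_ne_induct)
  case (singleton a) then show ?case by simp
next
  case (insert a A)
  obtain b where bA: "b \<in> A" using insert by blast
  have "x b \<le> (\<Sum>i\<in>A. x i)"
    using insert bA M by (intro member_le_sum) (auto intro: order_trans[OF M])
  then have "M \<le> (\<Sum>i\<in>A. x i)" using insert bA by force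
  then have "g (x a + (\<Sum>i\<in>A. x i)) \<le> g (x a) + g (\<Sum>i\<in>A. x i)"
    using insert sa by auto
  also have "\<dots> \<le> g (x a) + (\<Sum>i\<in>A. g (x i))" using insert by simp
  finally show ?case using insert by simp
qed

theorem mainTheorem12:
  fixes \<phi>1 \<phi>2 :: "real \<Rightarrow> real"
    and C1 C2 :: "real ^ 'd \<Rightarrow> real"
  assumes "strict_generator \<phi>1" and "strict_generator \<phi>2"
    and "C1 = archimedean \<phi>1" and "C2 = archimedean \<phi>2"
    and "is_copula C1" and "is_copula C2"
    and "subadditive_near_infinity (\<phi>1 \<circ> gen_inv \<phi>2)"
  shows "loc_le C1 C2"
proof -
  note g1 = assms(1) and g2 = assms(2)
  define f where "f = \<phi>1 \<circ> gen_inv \<phi>2"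
  obtain M where M: "M \<ge> 0" "\<And>a b. M \<le> a \<Longrightarrow> M \<le> b \<Longrightarrow> f (a + b) \<le> f a + f b"
    using assms(7) unfolding subadditive_near_infinity_def f_def by blast
  have "filterlim \<phi>2 at_top (at_right 0)" using g2 unfolding strict_generator_def by blast
  then have "eventually (\<lambda>x. M \<le> \<phi>2 x) (at_right (0::real))"
    unfolding filterlim_at_top by blast
  then obtain b where b: "b > 0" "\<And>x. x > 0 \<Longrightarrow> x < b \<Longrightarrow> M \<le> \<phi>2 x"
    unfolding eventually_at_right_field by blast
  show ?thesis unfolding loc_le_def
  proof (intro exI[of _ b] conjI ballI)
    show "b > 0" by fact
    fix u :: "real ^ 'd" assume u: "u \<in> ball 0 b \<inter> unit_cube"
    have ub: "\<And>k. u $ k < b" using u component_le_norm_cart[of u]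
      by (metis IntD1 abs_le_D1 dist_0_norm mem_ball order_le_less_trans)
    have uc: "\<And>k. 0 \<le> u $ k \<and> u $ k \<le> 1" using u unfolding unit_cube_def by blast
    show "C1 u \<le> C2 u"
    proof (cases "\<exists>k. u $ k = 0")
      case True then show ?thesis using assms(3,4) unfolding archimedean_def by simp
    next
      case False
      then have up: "\<And>k. u $ k \<in> {0<..1}" using uc by (metis greaterThanAtMost_iff order_le_less)
      define x where "x k = \<phi>2 (u $ k)" for k
      have xM: "\<And>k. M \<le> x k" unfolding x_def using b up ub by auto
      have x0: "\<And>k. 0 \<le> x k" using xM M by (meson order_trans)
      have fx: "\<And>k. \<phi>1 (u $ k) = f (x k)"
        unfolding f_def x_def using gi_left[OF g2 up] by simp
      define s where "s = (\<Sum>k\<in>UNIV. x k)"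
      have s0: "0 \<le> s" unfolding s_def using x0 by (simp add: sum_nonneg)
      define T where "T = (\<Sum>k\<in>UNIV. f (x k))"
      have fs: "f s \<le> T" unfolding s_def T_def
        using subadd_sum[of M f UNIV x] M xM by auto
      have C1u: "C1 u = gen_inv \<phi>1 T" using assms(3) False fx
        unfolding archimedean_def T_def by simp
      have C2u: "C2 u = gen_inv \<phi>2 s" using assms(4) False
        unfolding archimedean_def s_def x_def by simp
      have T0: "0 \<le> T" using fs gi_props[OF g2 s0] sg_nonneg[OF g1]
        unfolding f_def by (metis comp_apply greaterThanAtMost_iff order_trans)
      show ?thesis
      proof (rule ccontr)
        assume "\<not> C1 u \<le> C2 u"
        then have lt: "gen_inv \<phi>2 s < gen_inv \<phi>1 T" using C1u C2u by simp
        have "\<phi>1 (gen_inv \<phi>1 T) < \<phi>1 (gen_inv \<phi>2 s)"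
          using sg_mono[OF g1 _ lt] gi_props[OF g2 s0] gi_props[OF g1 T0] by auto
        then have "T < f s" using gi_props[OF g1 T0] unfolding f_def by simp
        then show False using fs by simp
      qed
    qed
  qed
qed

end
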